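(* Let $p$ be a prime, let $N,K,T,M,h$ be positive integers with $T\ge 1$ and $K\mid M$, and let $\beta_1,\ldots,\beta_{K+T}\in\mathbb{F}_p$ be pairwise distinct and $\alpha_1,\ldots,\alpha_N\in\mathbb{F}_p$ be pairwise distinct with $\{\alpha_1,\ldots,\alpha_N\}\cap\{\beta_1,\ldots,\beta_{K+T}\}=\emptyset$. For $k\in[K+T]$ let $L_k(x)=\prod_{\ell\in[K+T]\setminus\{k\}}\frac{x-\beta_\ell}{\beta_k-\beta_\ell}$. For each client $n\in[N]$ let $D_n,d_n$ be positive integers and let $\overline{X}_n=(\overline{X}_n^i)_{i\in[D_n]}$ with $\overline{X}_n^i\in\mathbb{F}_p^{M\times d_n}$ and $\overline{W}_n=(\overline{W}_n^i)_{i\in[D_n]}$ with $\overline{W}_n^i\in\mathbb{F}_p^{d_n\times h}$ be random variables (private data and model of client $n$); for $k\in[K]$ let $\overline{X}_{n,k}^i$ be the $k$-th block of $M/K$ consecutive rows of $\overline{X}_n^i$. Let all mask matrices $Z_{n,k}^i\in\mathbb{F}_p^{(M/K)\times d_n}$ and $V_{n,k}^i\in\mathbb{F}_p^{d_n\times h}$ ($n\in[N]$, $i\in[D_n]$, $k=K+1,\ldots,K+T$) be uniformly distributed, mutually independent, and independent of all data and models. Define $$F_n^i(x)=\sum_{k=1}^K\overline{X}_{n,k}^iL_k(x)+\sum_{k=K+1}^{K+T}Z_{n,k}^iL_k(x),\qquad G_n^i(x)=\sum_{k=1}^K\overline{W}_{n}^iL_k(x)+\sum_{k=K+1}^{K+T}V_{n,k}^iL_k(x).$$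 Fix a batch $\mathcal{B}\subseteq[M/K]$ of row indices, write $A^{(\mathcal{B})}$ for the rows of $A$ indexed by $\mathcal{B}$, and for each $n'\in[N]$ let $$\widetilde{H}_{n'}^{(\mathcal{B})}=\sum_{m=1}^N\sum_{i=1}^{D_m}F_m^{i}(\alpha_{n'})^{(\mathcal{B})}\,G_m^i(\alpha_{n'})$$ be the result uploaded by client $n'$ to the server. Then for every $n\in[N]$, $I\big(\widetilde{H}_n^{(\mathcal{B})};(\overline{X}_n,\overline{W}_n)\big)=0$, where $I$ denotes mutual information.
   Context: This is the privacy guarantee of the FedVS protocol for split vertical federated learning against a curious server: clients secret-share their quantized data and quantized polynomial-network models via Lagrange coded computing (partition parameter $K$, privacy parameter $T$) and each client uploads only its homomorphically computed coded embedding. $[N]=\{1,\ldots,N\}$. *)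

theory Defs
  imports "HOL-Probability.Probability" "Jordan_Normal_Form.Matrix"
begin

text \<open>Conventions: indices of clients, blocks, data items are 1-based as in the paper;
  matrix entries (Jordan_Normal_Form) are 0-based. The field F_p is a finite field type
  of prime cardinality.\<close>

definition lagrange_basis :: "(nat \<Rightarrow> 'a::field) \<Rightarrow> nat \<Rightarrow> nat \<Rightarrow> 'a \<Rightarrow> 'a" where
  "lagrange_basis \<beta> KT k x = (\<Prod>l\<in>{1..KT} - {k}. (x - \<beta> l) / (\<beta> k - \<beta> l))"

definition row_block :: "nat \<Rightarrow> nat \<Rightarrow> 'a mat \<Rightarrow> 'a mat" where
  "row_block r k A = mat r (dim_col A) (\<lambda>(a, b). A $$ ((k - 1) * r + a, b))"

definition select_rows :: "nat set \<Rightarrow> 'a mat \<Rightarrow> 'a mat" where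
  "select_rows B A = mat (card B) (dim_col A)
     (\<lambda>(a, b). A $$ (sorted_list_of_set B ! a - 1, b))"

definition coded_data ::
  "(nat \<Rightarrow> 'a::field) \<Rightarrow> nat \<Rightarrow> nat \<Rightarrow> nat \<Rightarrow> (nat \<Rightarrow> nat) \<Rightarrow>
   (nat \<Rightarrow> nat \<Rightarrow> 'a mat) \<Rightarrow> (nat \<Rightarrow> nat \<Rightarrow> nat \<Rightarrow> 'a mat) \<Rightarrow> nat \<Rightarrow> nat \<Rightarrow> 'a \<Rightarrow> 'a mat" where
  "coded_data \<beta> K T Mdim d X Z n i x =
     mat (Mdim div K) (d n) (\<lambda>(a, b).
        (\<Sum>k\<in>{1..K}. lagrange_basis \<beta> (K + T) k x * row_block (Mdim div K) k (X n i) $$ (a, b))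
      + (\<Sum>k\<in>{K+1..K+T}. lagrange_basis \<beta> (K + T) k x * Z n i k $$ (a, b)))"

definition coded_model ::
  "(nat \<Rightarrow> 'a::field) \<Rightarrow> nat \<Rightarrow> nat \<Rightarrow> nat \<Rightarrow> (nat \<Rightarrow> nat) \<Rightarrow>
   (nat \<Rightarrow> nat \<Rightarrow> 'a mat) \<Rightarrow> (nat \<Rightarrow> nat \<Rightarrow> nat \<Rightarrow> 'a mat) \<Rightarrow> nat \<Rightarrow> nat \<Rightarrow> 'a \<Rightarrow> 'a mat" where
  "coded_model \<beta> K T h d W V n i x =
     mat (d n) h (\<lambda>(a, b).
        (\<Sum>k\<in>{1..K}. lagrange_basis \<beta> (K + T) k x * W n i $$ (a, b))
      + (\<Sum>k\<in>{K+1..K+T}. lagrange_basis \<beta> (K + T) k x * V n i k $$ (a, b)))"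

definition uploaded ::
  "(nat \<Rightarrow> 'a::field) \<Rightarrow> (nat \<Rightarrow> 'a) \<Rightarrow> nat \<Rightarrow> nat \<Rightarrow> nat \<Rightarrow> nat \<Rightarrow> nat \<Rightarrow>
   (nat \<Rightarrow> nat) \<Rightarrow> (nat \<Rightarrow> nat) \<Rightarrow> nat set \<Rightarrow>
   (nat \<Rightarrow> nat \<Rightarrow> 'a mat) \<Rightarrow> (nat \<Rightarrow> nat \<Rightarrow> 'a mat) \<Rightarrow>
   (nat \<Rightarrow> nat \<Rightarrow> nat \<Rightarrow> 'a mat) \<Rightarrow> (nat \<Rightarrow> nat \<Rightarrow> nat \<Rightarrow> 'a mat) \<Rightarrow> nat \<Rightarrow> 'a mat" where
  "uploaded \<alpha> \<beta> N K T Mdim h D d B X W Z V n' =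
     mat (card B) h (\<lambda>(a, b). \<Sum>m\<in>{1..N}. \<Sum>i\<in>{1..D m}.
        (select_rows B (coded_data \<beta> K T Mdim d X Z m i (\<alpha> n'))
          * coded_model \<beta> K T h d W V m i (\<alpha> n')) $$ (a, b))"

text \<open>The uniform distribution
  on this (finite) set is exactly: all masks uniform and mutually independent.\<close>
definition mask_set ::
  "nat \<Rightarrow> nat \<Rightarrow> nat \<Rightarrow> nat \<Rightarrow> nat \<Rightarrow> (nat \<Rightarrow> nat) \<Rightarrow> (nat \<Rightarrow> nat) \<Rightarrow>
   ((nat \<Rightarrow> nat \<Rightarrow> nat \<Rightarrow> 'a::zero mat) \<times> (nat \<Rightarrow> nat \<Rightarrow> nat \<Rightarrow> 'a mat)) set" where
  "mask_set N K T Mdim h D d = {(Z, V). \<forall>n i k.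
     (if n \<in> {1..N} \<and> i \<in> {1..D n} \<and> k \<in> {K+1..K+T}
      then Z n i k \<in> carrier_mat (Mdim div K) (d n) \<and> V n i k \<in> carrier_mat (d n) h
      else Z n i k = 0\<^sub>m 0 0 \<and> V n i k = 0\<^sub>m 0 0)}"

end

theory Submission imports Defs begin
lemma joint_pmf_indep:
  fixes \<mu> :: "'x pmf" and U :: "'z pmf" and F :: "'x \<Rightarrow> 'z \<Rightarrow> 'h" and G :: "'x \<Rightarrow> 'y"
  assumes "\<And>xw. map_pmf (F xw) U = \<nu>"
  shows "map_pmf (\<lambda>\<omega>. (case_prod F \<omega>, G (fst \<omega>))) (pair_pmf \<mu> U)
       = pair_pmf (map_pmf (case_prod F) (pair_pmf \<mu> U)) (map_pmf (\<lambda>\<omega>. G (fst \<omega>)) (pair_pmf \<mu> U))"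
proof -
  have 1: "map_pmf (case_prod F) (pair_pmf \<mu> U) = \<nu>"
  proof -
    have "map_pmf (case_prod F) (pair_pmf \<mu> U) = bind_pmf \<mu> (\<lambda>xw. map_pmf (F xw) U)"
      by (simp add: pair_pmf_def map_bind_pmf map_pmf_def[symmetric] pmf.map_comp comp_def)
    then show ?thesis by (simp add: assms)
  qed
  have 2: "map_pmf (\<lambda>\<omega>. G (fst \<omega>)) (pair_pmf \<mu> U) = map_pmf G \<mu>"
  proof -
    have "map_pmf (\<lambda>\<omega>. G (fst \<omega>)) (pair_pmf \<mu> U) = map_pmf G (map_pmf fst (pair_pmf \<mu> U))"
      by (simp add: pmf.map_comp comp_def)
    then show ?thesis by (simp only: map_fst_pair_pmf)
  qed
  have "map_pmf (\<lambda>\<omega>. (case_prod F \<omega>, G (fst \<omega>))) (pair_pmf \<mu> U)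
      = bind_pmf \<mu> (\<lambda>xw. map_pmf (\<lambda>h. (h, G xw)) (map_pmf (F xw) U))"
    by (simp add: pair_pmf_def map_bind_pmf map_pmf_def[symmetric] pmf.map_comp comp_def)
  also have "\<dots> = bind_pmf \<mu> (\<lambda>xw. bind_pmf \<nu> (\<lambda>h. return_pmf (h, G xw)))"
    by (simp only: assms) (simp add: map_pmf_def)
  also have "\<dots> = bind_pmf \<nu> (\<lambda>h. bind_pmf \<mu> (\<lambda>xw. return_pmf (h, G xw)))"
    by (rule bind_commute_pmf)
  also have "\<dots> = pair_pmf \<nu> (map_pmf G \<mu>)"
    by (simp add: pair_pmf_def map_pmf_def bind_assoc_pmf bind_return_pmf)
  finally show ?thesis using 1 2 by simp
qed

lemma mi_zero_pmf:
  fixes P :: "'w pmf" and H :: "'w \<Rightarrow> 'h" and Y :: "'w \<Rightarrow> 'y"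
  assumes "map_pmf (\<lambda>\<omega>. (H \<omega>, Y \<omega>)) P = pair_pmf (map_pmf H P) (map_pmf Y P)"
  shows "prob_space.mutual_information (measure_pmf P) 2 (count_space UNIV) (count_space UNIV) H Y = 0"
proof -
  let ?M = "measure_pmf P"
  let ?S = "count_space UNIV :: 'h measure" and ?T = "count_space UNIV :: 'y measure"
  have dH: "distr ?M ?S H = measure_pmf (map_pmf H P)" by (simp add: map_pmf_rep_eq)
  have dY: "distr ?M ?T Y = measure_pmf (map_pmf Y P)" by (simp add: map_pmf_rep_eq)
  have eq: "distr ?M ?S H \<Otimes>\<^sub>M distr ?M ?T Y = distr ?M (?S \<Otimes>\<^sub>M ?T) (\<lambda>\<omega>. (H \<omega>, Y \<omega>))"
  proof (rule measure_eqI)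
    have s: "sets (measure_pmf (map_pmf H P) \<Otimes>\<^sub>M measure_pmf (map_pmf Y P)) = sets (?S \<Otimes>\<^sub>M ?T)"
      by (rule sets_pair_measure_cong) auto
    show "sets (distr ?M ?S H \<Otimes>\<^sub>M distr ?M ?T Y) = sets (distr ?M (?S \<Otimes>\<^sub>M ?T) (\<lambda>\<omega>. (H \<omega>, Y \<omega>)))"
      using s dH dY by (simp add: sets_pair_measure_cong)
    fix A assume "A \<in> sets (distr ?M ?S H \<Otimes>\<^sub>M distr ?M ?T Y)"
    then have A: "A \<in> sets (measure_pmf (map_pmf H P) \<Otimes>\<^sub>M measure_pmf (map_pmf Y P))"
      using dH dY by (simp only:)
    have "emeasure (distr ?M ?S H \<Otimes>\<^sub>M distr ?M ?T Y) A
       = (\<integral>\<^sup>+ x. \<integral>\<^sup>+ y. indicator A (x, y) \<partial>(map_pmf Y P) \<partial>(map_pmf H P))"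
      using dH dY measure_pmf.emeasure_pair_measure[OF A] by simp
    also have "\<dots> = (\<integral>\<^sup>+ z. indicator A z \<partial>(pair_pmf (map_pmf H P) (map_pmf Y P)))"
      by (simp add: nn_integral_pair_pmf')
    also have "\<dots> = emeasure (measure_pmf (map_pmf (\<lambda>\<omega>. (H \<omega>, Y \<omega>)) P)) A"
      by (simp add: assms)
    also have "\<dots> = emeasure (distr ?M (?S \<Otimes>\<^sub>M ?T) (\<lambda>\<omega>. (H \<omega>, Y \<omega>))) A"
      using A s by (simp add: map_pmf_rep_eq emeasure_distr) (subst emeasure_distr, auto simp: space_pair_measure)
    finally show "emeasure (distr ?M ?S H \<Otimes>\<^sub>M distr ?M ?T Y) A
       = emeasure (distr ?M (?S \<Otimes>\<^sub>M ?T) (\<lambda>\<omega>. (H \<omega>, Y \<omega>))) A" .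
  qed
  interpret Q: prob_space "distr ?M (?S \<Otimes>\<^sub>M ?T) (\<lambda>\<omega>. (H \<omega>, Y \<omega>))"
    by (rule prob_space.prob_space_distr) (auto simp: prob_space_measure_pmf space_pair_measure)
  have "prob_space.mutual_information (measure_pmf P) 2 (count_space UNIV) (count_space UNIV) H Y
      = KL_divergence 2 (distr ?M (?S \<Otimes>\<^sub>M ?T) (\<lambda>\<omega>. (H \<omega>, Y \<omega>))) (distr ?M (?S \<Otimes>\<^sub>M ?T) (\<lambda>\<omega>. (H \<omega>, Y \<omega>)))"
    unfolding prob_space.mutual_information_def[OF prob_space_measure_pmf] eq ..
  also have "\<dots> = 0" by (rule Q.KL_same_eq_0)
  finally show ?thesis .
qed
definition DXe :: "(nat \<Rightarrow> 'a::field) \<Rightarrow> nat \<Rightarrow> nat \<Rightarrow> nat \<Rightarrow> 'a \<Rightarrow> (nat \<Rightarrow> nat \<Rightarrow> 'a mat) \<Rightarrow> nat \<Rightarrow> nat \<Rightarrow> nat \<Rightarrow> nat \<Rightarrow> 'a" where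
  "DXe \<beta> K T Mdim x X m i a b = (\<Sum>k\<in>{1..K}. lagrange_basis \<beta> (K + T) k x * row_block (Mdim div K) k (X m i) $$ (a, b))"

definition DWe :: "(nat \<Rightarrow> 'a::field) \<Rightarrow> nat \<Rightarrow> nat \<Rightarrow> 'a \<Rightarrow> (nat \<Rightarrow> nat \<Rightarrow> 'a mat) \<Rightarrow> nat \<Rightarrow> nat \<Rightarrow> nat \<Rightarrow> nat \<Rightarrow> 'a" where
  "DWe \<beta> K T x W m i a b = (\<Sum>k\<in>{1..K}. lagrange_basis \<beta> (K + T) k x * W m i $$ (a, b))"

definition shiftZ where
  "shiftZ \<beta> K T Mdim N D d x X X0 Z = (\<lambda>m i k. if m \<in> {1..N} \<and> i \<in> {1..D m} \<and> k = K + 1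
     then mat (Mdim div K) (d m) (\<lambda>(a, b). Z m i k $$ (a, b) - inverse (lagrange_basis \<beta> (K + T) (K + 1) x)
        * (DXe \<beta> K T Mdim x X m i a b - DXe \<beta> K T Mdim x X0 m i a b))
     else Z m i k)"

definition shiftV where
  "shiftV \<beta> K T h N D d x W W0 V = (\<lambda>m i k. if m \<in> {1..N} \<and> i \<in> {1..D m} \<and> k = K + 1
     then mat (d m) h (\<lambda>(a, b). V m i k $$ (a, b) - inverse (lagrange_basis \<beta> (K + T) (K + 1) x)
        * (DWe \<beta> K T x W m i a b - DWe \<beta> K T x W0 m i a b))
     else V m i k)"

lemma coded_data_shift:
  fixes \<beta> :: "nat \<Rightarrow> 'a::field"
  assumes L: "lagrange_basis \<beta> (K + T) (K + 1) x \<noteq> 0" and T: "T \<ge> 1"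
    and m: "m \<in> {1..N}" and i: "i \<in> {1..D m}"
  shows "coded_data \<beta> K T Mdim d X (shiftZ \<beta> K T Mdim N D d x X X0 Z) m i x
       = coded_data \<beta> K T Mdim d X0 Z m i x"
  unfolding coded_data_def
proof (rule cong_mat, simp, simp)
  fix a b assume a: "a < Mdim div K" and b: "b < d m"
  let ?L = "\<lambda>k. lagrange_basis \<beta> (K + T) k x"
  let ?Z' = "shiftZ \<beta> K T Mdim N D d x X X0 Z"
  have split: "\<And>f. (\<Sum>k\<in>{K+1..K+T}. f k) = f (K + 1) + (\<Sum>k\<in>{Suc (K+1)..K+T}. f k)"
    using T by (intro sum.atLeast_Suc_atMost) simp
  have rest: "(\<Sum>k\<in>{Suc (K+1)..K+T}. ?L k * ?Z' m i k $$ (a, b)) = (\<Sum>k\<in>{Suc (K+1)..K+T}. ?L k * Z m i k $$ (a, b))"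
    by (rule sum.cong) (auto simp: shiftZ_def)
  have first: "?Z' m i (K+1) $$ (a, b) = Z m i (K+1) $$ (a, b) - inverse (?L (K+1))
        * (DXe \<beta> K T Mdim x X m i a b - DXe \<beta> K T Mdim x X0 m i a b)"
    using m i a b by (simp add: shiftZ_def)
  have "DXe \<beta> K T Mdim x X m i a b + ?L (K+1) * ?Z' m i (K+1) $$ (a, b)
      = DXe \<beta> K T Mdim x X0 m i a b + ?L (K+1) * Z m i (K+1) $$ (a, b)"
    using L unfolding first by (simp add: field_simps)
  then show "(case (a, b) of (a, b) \<Rightarrow>
          (\<Sum>k = 1..K. ?L k * row_block (Mdim div K) k (X m i) $$ (a, b)) +
          (\<Sum>k = K + 1..K + T. ?L k * ?Z' m i k $$ (a, b))) =
         (case (a, b) of (a, b) \<Rightarrow>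
          (\<Sum>k = 1..K. ?L k * row_block (Mdim div K) k (X0 m i) $$ (a, b)) +
          (\<Sum>k = K + 1..K + T. ?L k * Z m i k $$ (a, b)))"
    using rest unfolding split by (simp add: DXe_def algebra_simps)
qed

lemma coded_model_shift:
  fixes \<beta> :: "nat \<Rightarrow> 'a::field"
  assumes L: "lagrange_basis \<beta> (K + T) (K + 1) x \<noteq> 0" and T: "T \<ge> 1"
    and m: "m \<in> {1..N}" and i: "i \<in> {1..D m}"
  shows "coded_model \<beta> K T h d W (shiftV \<beta> K T h N D d x W W0 V) m i x
       = coded_model \<beta> K T h d W0 V m i x"
  unfolding coded_model_def
proof (rule cong_mat, simp, simp)
  fix a b assume a: "a < d m" and b: "b < h"
  let ?L = "\<lambda>k. lagrange_basis \<beta> (K + T) k x"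
  let ?Z' = "shiftV \<beta> K T h N D d x W W0 V"
  have split: "\<And>f. (\<Sum>k\<in>{K+1..K+T}. f k) = f (K + 1) + (\<Sum>k\<in>{Suc (K+1)..K+T}. f k)"
    using T by (intro sum.atLeast_Suc_atMost) simp
  have rest: "(\<Sum>k\<in>{Suc (K+1)..K+T}. ?L k * ?Z' m i k $$ (a, b)) = (\<Sum>k\<in>{Suc (K+1)..K+T}. ?L k * V m i k $$ (a, b))"
    by (rule sum.cong) (auto simp: shiftV_def)
  have first: "?Z' m i (K+1) $$ (a, b) = V m i (K+1) $$ (a, b) - inverse (?L (K+1))
        * (DWe \<beta> K T x W m i a b - DWe \<beta> K T x W0 m i a b)"
    using m i a b by (simp add: shiftV_def)
  have "DWe \<beta> K T x W m i a b + ?L (K+1) * ?Z' m i (K+1) $$ (a, b)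
      = DWe \<beta> K T x W0 m i a b + ?L (K+1) * V m i (K+1) $$ (a, b)"
    using L unfolding first by (simp add: field_simps)
  then show "(case (a, b) of (a, b) \<Rightarrow>
          (\<Sum>k = 1..K. ?L k * W m i $$ (a, b)) +
          (\<Sum>k = K + 1..K + T. ?L k * ?Z' m i k $$ (a, b))) =
         (case (a, b) of (a, b) \<Rightarrow>
          (\<Sum>k = 1..K. ?L k * W0 m i $$ (a, b)) +
          (\<Sum>k = K + 1..K + T. ?L k * V m i k $$ (a, b)))"
    using rest unfolding split by (simp add: DWe_def algebra_simps)
qed

lemma uploaded_shift:
  fixes \<beta> :: "nat \<Rightarrow> 'a::field"
  assumes L: "lagrange_basis \<beta> (K + T) (K + 1) (\<alpha> n) \<noteq> 0" and T: "T \<ge> 1"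
  shows "uploaded \<alpha> \<beta> N K T Mdim h D d B X W (shiftZ \<beta> K T Mdim N D d (\<alpha> n) X X0 Z)
           (shiftV \<beta> K T h N D d (\<alpha> n) W W0 V) n = uploaded \<alpha> \<beta> N K T Mdim h D d B X0 W0 Z V n"
  unfolding uploaded_def
  by (rule cong_mat, simp, simp, simp, intro sum.cong refl)
    (simp add: coded_data_shift[OF L T] coded_model_shift[OF L T])

lemma finite_carrier_mat: "finite (carrier_mat r c :: 'a::finite mat set)"
proof (rule finite_subset)
  show "carrier_mat r c \<subseteq> (\<lambda>g. mat r c g) ` (({..<r} \<times> {..<c}) \<rightarrow>\<^sub>E (UNIV :: 'a set))"
  proof
    fix A :: "'a mat" assume A: "A \<in> carrier_mat r c"
    have "A = mat r c (restrict (\<lambda>ij. A $$ ij) ({..<r} \<times> {..<c}))"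
      using A by (intro eq_matI) auto
    then show "A \<in> (\<lambda>g. mat r c g) ` (({..<r} \<times> {..<c}) \<rightarrow>\<^sub>E UNIV)"
      by (intro image_eqI[where x="restrict (\<lambda>ij. A $$ ij) ({..<r} \<times> {..<c})"]) auto
  qed
  show "finite ((\<lambda>g. mat r c g) ` (({..<r} \<times> {..<c}) \<rightarrow>\<^sub>E (UNIV :: 'a set)))"
    by (intro finite_imageI finite_PiE) auto
qed

lemma finite_mask_set: "finite (mask_set N K T Mdim h D d :: ((nat \<Rightarrow> nat \<Rightarrow> nat \<Rightarrow> 'a::{finite,zero} mat) \<times> _) set)"
proof -
  define Ind where "Ind = (SIGMA m:{1..N}. SIGMA i:{1..D m}. {K+1..K+T})"
  define CM where "CM = (\<Union>m\<in>{1..N}. carrier_mat (Mdim div K) (d m) \<union> carrier_mat (d m) h :: 'a mat set)"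
  define emb where "emb = (\<lambda>f :: nat \<times> nat \<times> nat \<Rightarrow> 'a mat. \<lambda>m i k. if m \<in> {1..N} \<and> i \<in> {1..D m} \<and> k \<in> {K+1..K+T} then f (m, i, k) else 0\<^sub>m 0 0)"
  have fI: "finite Ind" unfolding Ind_def by (intro finite_SigmaI) auto
  have fC: "finite CM" unfolding CM_def by (intro finite_UN_I finite_UnI finite_carrier_mat) auto
  have "mask_set N K T Mdim h D d \<subseteq> (\<lambda>(fz, fv). (emb fz, emb fv)) ` ((Ind \<rightarrow>\<^sub>E CM) \<times> (Ind \<rightarrow>\<^sub>E CM))"
  proof
    fix ZV :: "(nat \<Rightarrow> nat \<Rightarrow> nat \<Rightarrow> 'a mat) \<times> (nat \<Rightarrow> nat \<Rightarrow> nat \<Rightarrow> 'a mat)" assume ZV: "ZV \<in> mask_set N K T Mdim h D d"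
    obtain Z V where ZVd: "ZV = (Z, V)" by (cases ZV)
    have P: "\<forall>m i k. (if m \<in> {1..N} \<and> i \<in> {1..D m} \<and> k \<in> {K+1..K+T}
      then Z m i k \<in> carrier_mat (Mdim div K) (d m) \<and> V m i k \<in> carrier_mat (d m) h
      else Z m i k = 0\<^sub>m 0 0 \<and> V m i k = 0\<^sub>m 0 0)"
      using ZV unfolding ZVd mask_set_def by simp
    define fz where "fz = restrict (\<lambda>(m, i, k). Z m i k) Ind"
    define fv where "fv = restrict (\<lambda>(m, i, k). V m i k) Ind"
    have "fz \<in> Ind \<rightarrow>\<^sub>E CM" "fv \<in> Ind \<rightarrow>\<^sub>E CM"
      using P unfolding fz_def fv_def Ind_def CM_def
      by (auto split: if_splits)
    moreover have "emb fz = Z" "emb fv = V"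
      using P unfolding emb_def fz_def fv_def Ind_def
      by (auto simp: fun_eq_iff split: if_splits)
    ultimately show "ZV \<in> (\<lambda>(fz, fv). (emb fz, emb fv)) ` ((Ind \<rightarrow>\<^sub>E CM) \<times> (Ind \<rightarrow>\<^sub>E CM))"
      unfolding ZVd by (intro image_eqI[where x="(fz, fv)"]) auto
  qed
  moreover have "finite ((\<lambda>(fz, fv). (emb fz, emb fv)) ` ((Ind \<rightarrow>\<^sub>E CM) \<times> (Ind \<rightarrow>\<^sub>E CM)))"
    using fI fC by (intro finite_imageI finite_cartesian_product finite_PiE) auto
  ultimately show ?thesis by (rule finite_subset)
qed

lemma nonempty_mask_set: "(\<lambda>m i k. if m \<in> {1..N} \<and> i \<in> {1..D m} \<and> k \<in> {K+1..K+T} then 0\<^sub>m (Mdim div K) (d m) else 0\<^sub>m 0 0,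
    \<lambda>m i k. if m \<in> {1..N} \<and> i \<in> {1..D m} \<and> k \<in> {K+1..K+T} then 0\<^sub>m (d m) h else 0\<^sub>m 0 0) \<in> mask_set N K T Mdim h D d"
  unfolding mask_set_def by auto

lemma shift_entry_inj:
  assumes e: "mat r c (\<lambda>(a, b). A $$ (a, b) - g a b) = mat r c (\<lambda>(a, b). B $$ (a, b) - g a b)"
    and A: "A \<in> carrier_mat r c" and B: "B \<in> carrier_mat r c"
  shows "A = (B :: 'a::ab_group_add mat)"
proof (rule eq_matI)
  fix i j assume "i < dim_row B" "j < dim_col B"
  then have ij: "i < r" "j < c" using B by auto
  have "mat r c (\<lambda>(a, b). A $$ (a, b) - g a b) $$ (i, j) = mat r c (\<lambda>(a, b). B $$ (a, b) - g a b) $$ (i, j)"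
    using e by simp
  then show "A $$ (i, j) = B $$ (i, j)" using ij by simp
qed (use A B in auto)

lemma shift_in_mask:
  assumes T: "T \<ge> 1" and ZV: "(Z, V) \<in> mask_set N K T Mdim h D d"
  shows "(shiftZ \<beta> K T Mdim N D d x X X0 Z, shiftV \<beta> K T h N D d x W W0 V) \<in> mask_set N K T Mdim h D d"
  using ZV T unfolding mask_set_def shiftZ_def shiftV_def
  by (auto split: if_splits)

lemma shift_inj:
  assumes T: "T \<ge> 1"
  shows "inj_on (\<lambda>(Z, V). (shiftZ \<beta> K T Mdim N D d x X X0 Z, shiftV \<beta> K T h N D d x W W0 V))
     (mask_set N K T Mdim h D d)"
proof (rule inj_onI, clarify)
  fix Z1 V1 Z2 V2
  assume 1: "(Z1, V1) \<in> mask_set N K T Mdim h D d" and 2: "(Z2, V2) \<in> mask_set N K T Mdim h D d"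
    and ez: "shiftZ \<beta> K T Mdim N D d x X X0 Z1 = shiftZ \<beta> K T Mdim N D d x X X0 Z2"
    and ev: "shiftV \<beta> K T h N D d x W W0 V1 = shiftV \<beta> K T h N D d x W W0 V2"
  have P1: "\<And>m i k. m \<in> {1..N} \<and> i \<in> {1..D m} \<and> k \<in> {K+1..K+T} \<Longrightarrow>
      Z1 m i k \<in> carrier_mat (Mdim div K) (d m) \<and> V1 m i k \<in> carrier_mat (d m) h"
    using 1 unfolding mask_set_def by simp
  have P2: "\<And>m i k. m \<in> {1..N} \<and> i \<in> {1..D m} \<and> k \<in> {K+1..K+T} \<Longrightarrow>
      Z2 m i k \<in> carrier_mat (Mdim div K) (d m) \<and> V2 m i k \<in> carrier_mat (d m) h"
    using 2 unfolding mask_set_def by simp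
  show "Z1 = Z2 \<and> V1 = V2"
  proof (intro conjI ext)
    fix m i k
    show "Z1 m i k = Z2 m i k"
    proof (cases "m \<in> {1..N} \<and> i \<in> {1..D m} \<and> k = K + 1")
      case True
      with T have c: "m \<in> {1..N} \<and> i \<in> {1..D m} \<and> k \<in> {K+1..K+T}" by auto
      from ez have "shiftZ \<beta> K T Mdim N D d x X X0 Z1 m i k = shiftZ \<beta> K T Mdim N D d x X X0 Z2 m i k" by simp
      with True have "mat (Mdim div K) (d m) (\<lambda>(a, b). Z1 m i k $$ (a, b) - inverse (lagrange_basis \<beta> (K + T) (K + 1) x)
        * (DXe \<beta> K T Mdim x X m i a b - DXe \<beta> K T Mdim x X0 m i a b)) =
        mat (Mdim div K) (d m) (\<lambda>(a, b). Z2 m i k $$ (a, b) - inverse (lagrange_basis \<beta> (K + T) (K + 1) x)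
        * (DXe \<beta> K T Mdim x X m i a b - DXe \<beta> K T Mdim x X0 m i a b))"
        unfolding shiftZ_def by simp
      then show ?thesis by (rule shift_entry_inj) (use P1[OF c] P2[OF c] in auto)
    next
      case False
      from ez have "shiftZ \<beta> K T Mdim N D d x X X0 Z1 m i k = shiftZ \<beta> K T Mdim N D d x X X0 Z2 m i k" by simp
      with False show ?thesis unfolding shiftZ_def by (auto split: if_splits)
    qed
  next
    fix m i k
    show "V1 m i k = V2 m i k"
    proof (cases "m \<in> {1..N} \<and> i \<in> {1..D m} \<and> k = K + 1")
      case True
      with T have c: "m \<in> {1..N} \<and> i \<in> {1..D m} \<and> k \<in> {K+1..K+T}" by auto
      from ev have "shiftV \<beta> K T h N D d x W W0 V1 m i k = shiftV \<beta> K T h N D d x W W0 V2 m i k" by simp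
      with True have "mat (d m) h (\<lambda>(a, b). V1 m i k $$ (a, b) - inverse (lagrange_basis \<beta> (K + T) (K + 1) x)
        * (DWe \<beta> K T x W m i a b - DWe \<beta> K T x W0 m i a b)) =
        mat (d m) h (\<lambda>(a, b). V2 m i k $$ (a, b) - inverse (lagrange_basis \<beta> (K + T) (K + 1) x)
        * (DWe \<beta> K T x W m i a b - DWe \<beta> K T x W0 m i a b))"
        unfolding shiftV_def by simp
      then show ?thesis by (rule shift_entry_inj) (use P1[OF c] P2[OF c] in auto)
    next
      case False
      from ev have "shiftV \<beta> K T h N D d x W W0 V1 m i k = shiftV \<beta> K T h N D d x W W0 V2 m i k" by simp
      with False show ?thesis unfolding shiftV_def by (auto split: if_splits)
    qed
  qed
qed

lemma lagrange_nonzero: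
  fixes \<alpha> \<beta> :: "nat \<Rightarrow> 'a::field"
  assumes "T \<ge> 1" "inj_on \<beta> {1..K+T}" "\<alpha> ` {1..N} \<inter> \<beta> ` {1..K+T} = {}" "n \<in> {1..N}"
  shows "lagrange_basis \<beta> (K + T) (K + 1) (\<alpha> n) \<noteq> 0"
proof -
  have "\<forall>l\<in>{1..K+T} - {K+1}. (\<alpha> n - \<beta> l) / (\<beta> (K + 1) - \<beta> l) \<noteq> 0"
  proof
    fix l assume l: "l \<in> {1..K+T} - {K+1}"
    have "\<alpha> n \<noteq> \<beta> l" using assms(3,4) l by blast
    moreover have "\<beta> (K + 1) \<noteq> \<beta> l" using assms(1,2) l by (auto dest: inj_onD)
    ultimately show "(\<alpha> n - \<beta> l) / (\<beta> (K + 1) - \<beta> l) \<noteq> 0" by simp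
  qed
  then show ?thesis unfolding lagrange_basis_def by (subst prod_zero_iff) auto
qed

theorem theorem3:
  fixes \<alpha> \<beta> :: "nat \<Rightarrow> 'a::{finite, field}"
    and N K T Mdim h :: nat
    and D d :: "nat \<Rightarrow> nat"
    and B :: "nat set"
    and \<mu> :: "((nat \<Rightarrow> nat \<Rightarrow> 'a mat) \<times> (nat \<Rightarrow> nat \<Rightarrow> 'a mat)) pmf"
    and n :: nat
  assumes "prime CARD('a)"
    and "N \<ge> 1" "K \<ge> 1" "T \<ge> 1" "Mdim \<ge> 1" "h \<ge> 1"
    and "K dvd Mdim"
    and "inj_on \<beta> {1..K+T}"
    and "inj_on \<alpha> {1..N}"
    and "\<alpha> ` {1..N} \<inter> \<beta> ` {1..K+T} = {}"
    and "\<forall>m\<in>{1..N}. D m \<ge> 1 \<and> d m \<ge> 1"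
    and "\<forall>(X, W) \<in> set_pmf \<mu>. \<forall>m\<in>{1..N}. \<forall>i\<in>{1..D m}.
           X m i \<in> carrier_mat Mdim (d m) \<and> W m i \<in> carrier_mat (d m) h"
    and "B \<subseteq> {1..Mdim div K}"
    and "n \<in> {1..N}"
  shows "prob_space.mutual_information (measure_pmf
           (pair_pmf \<mu> (pmf_of_set (mask_set N K T Mdim h D d)))) 2
           (count_space UNIV) (count_space UNIV)
           (\<lambda>((X, W), (Z, V)). uploaded \<alpha> \<beta> N K T Mdim h D d B X W Z V n)
           (\<lambda>((X, W), (Z, V)). (map (X n) [1..<D n + 1], map (W n) [1..<D n + 1]))
         = 0"
proof -
  let ?S = "mask_set N K T Mdim h D d :: ((nat \<Rightarrow> nat \<Rightarrow> nat \<Rightarrow> 'a mat) \<times> (nat \<Rightarrow> nat \<Rightarrow> nat \<Rightarrow> 'a mat)) set"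
  let ?U = "pmf_of_set ?S"
  define X0 :: "nat \<Rightarrow> nat \<Rightarrow> 'a mat" where "X0 = (\<lambda>_ _. 0\<^sub>m 0 0)"
  define W0 :: "nat \<Rightarrow> nat \<Rightarrow> 'a mat" where "W0 = (\<lambda>_ _. 0\<^sub>m 0 0)"
  define F :: "(nat \<Rightarrow> nat \<Rightarrow> 'a mat) \<times> (nat \<Rightarrow> nat \<Rightarrow> 'a mat) \<Rightarrow>
      (nat \<Rightarrow> nat \<Rightarrow> nat \<Rightarrow> 'a mat) \<times> (nat \<Rightarrow> nat \<Rightarrow> nat \<Rightarrow> 'a mat) \<Rightarrow> 'a mat"
    where "F = (\<lambda>(X, W) (Z, V). uploaded \<alpha> \<beta> N K T Mdim h D d B X W Z V n)"
  define G :: "(nat \<Rightarrow> nat \<Rightarrow> 'a mat) \<times> (nat \<Rightarrow> nat \<Rightarrow> 'a mat) \<Rightarrow> 'a mat list \<times> 'a mat list"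
    where "G = (\<lambda>(X, W). (map (X n) [1..<D n + 1], map (W n) [1..<D n + 1]))"
  define \<sigma> :: "(nat \<Rightarrow> nat \<Rightarrow> 'a mat) \<times> (nat \<Rightarrow> nat \<Rightarrow> 'a mat) \<Rightarrow>
      (nat \<Rightarrow> nat \<Rightarrow> nat \<Rightarrow> 'a mat) \<times> (nat \<Rightarrow> nat \<Rightarrow> nat \<Rightarrow> 'a mat) \<Rightarrow>
      (nat \<Rightarrow> nat \<Rightarrow> nat \<Rightarrow> 'a mat) \<times> (nat \<Rightarrow> nat \<Rightarrow> nat \<Rightarrow> 'a mat)"
    where "\<sigma> = (\<lambda>(X, W) (Z, V). (shiftZ \<beta> K T Mdim N D d (\<alpha> n) X X0 Z, shiftV \<beta> K T h N D d (\<alpha> n) W W0 V))"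
  have L: "lagrange_basis \<beta> (K + T) (K + 1) (\<alpha> n) \<noteq> 0"
    using assms by (intro lagrange_nonzero) auto
  have T: "T \<ge> 1" using assms by simp
  have fin: "finite ?S" by (rule finite_mask_set)
  have ne: "?S \<noteq> {}" using nonempty_mask_set by blast
  have inj: "inj_on (\<sigma> xw) ?S" for xw
    using shift_inj[OF T] unfolding \<sigma>_def by (cases xw) simp
  have sub: "\<sigma> xw ` ?S \<subseteq> ?S" for xw
    using shift_in_mask[OF T] unfolding \<sigma>_def by (cases xw) auto
  have img: "\<sigma> xw ` ?S = ?S" for xw
    using card_image[OF inj[of xw]] sub[of xw] fin by (intro card_subset_eq) auto
  have comp: "F xw (\<sigma> xw zv) = F (X0, W0) zv" for xw zv
    unfolding F_def \<sigma>_def by (cases xw, cases zv) (simp add: uploaded_shift[where \<alpha>=\<alpha> and n=n and \<beta>=\<beta> and K=K and T=T, OF L T])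
  have nu: "map_pmf (F xw) ?U = map_pmf (F (X0, W0)) ?U" for xw
  proof -
    have "map_pmf (F xw) ?U = map_pmf (F xw) (map_pmf (\<sigma> xw) ?U)"
      by (simp add: map_pmf_of_set_inj[OF inj ne fin] img)
    also have "\<dots> = map_pmf (\<lambda>zv. F xw (\<sigma> xw zv)) ?U"
      by (simp add: pmf.map_comp comp_def)
    also have "\<dots> = map_pmf (F (X0, W0)) ?U"
      by (simp add: comp)
    finally show ?thesis .
  qed
  have j: "map_pmf (\<lambda>\<omega>. (case_prod F \<omega>, G (fst \<omega>))) (pair_pmf \<mu> ?U)
       = pair_pmf (map_pmf (case_prod F) (pair_pmf \<mu> ?U)) (map_pmf (\<lambda>\<omega>. G (fst \<omega>)) (pair_pmf \<mu> ?U))"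
    by (rule joint_pmf_indep[OF nu])
  have eH: "(\<lambda>((X, W), (Z, V)). uploaded \<alpha> \<beta> N K T Mdim h D d B X W Z V n) = case_prod F"
    by (auto simp: F_def fun_eq_iff)
  have eY: "(\<lambda>((X, W), (Z, V)). (map (X n) [1..<D n + 1], map (W n) [1..<D n + 1]))
      = (\<lambda>\<omega>. G (fst \<omega>))"
    by (auto simp: G_def fun_eq_iff)
  show ?thesis unfolding eH eY by (rule mi_zero_pmf[OF j])
qed

end
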